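(* Let $P\subset V$ be a rational polyhedron invariant under translations by elements of a rational linear subspace $L_0$, and let $\sigma\in\Lambda_{\mathbb{Q}}$. Let $p=p(k,\lambda)$ be a quasi-polynomial function on $\mathbb{Z}\oplus\Lambda$ that is polynomial in $\lambda$, let $g\in\Lambda^\wedge_{\mathbb{Q}}$ and set $q(k,\lambda)=g^\lambda p(k,\lambda)$. If the restriction of $g$ to $\Lambda\cap L_0$ is a non-constant character, then $m=q[C_{P,\sigma}]$ satisfies $\mathcal{A}(m)=0$.
   Context: $V$ finite-dimensional real vector space, $\Lambda\subset V$ full-rank lattice, $\Lambda_{\mathbb{Q}}=\Lambda\otimes\mathbb{Q}$; a linear subspace $L_0$ is rational if $L_0\cap\Lambda$ has full rank in $L_0$. Rational polyhedron: finite intersection of half-spaces $\{v:\langle a,v\rangle\ge c\}$, $a\in\mathrm{Hom}(\Lambda,\mathbb{Z})\otimes\mathbb{Q}$, $c\in\mathbb{Q}$. $C_{P,\sigma}=\{(t,tv+\sigma):t>0,v\in P\}$, $[C_{P,\sigma}]$ its indicator on $\mathbb{Z}\oplus\Lambda$. Quasi-polynomials: algebra generated by polynomials and periodic functions on the lattice. $\Lambda^\wedge_{\mathbb{Q}}$: finite-order elements of $\mathrm{Hom}(\Lambda,U(1))$, $g^\lambda=g(\lambda)$. For such $m$, $\Theta(m;k)=\sum_\lambda m(k,\lambda)\delta_{\lambda/k}$ ($k\in\mathbb{Z}_{>0}$), and $\mathcal{A}(m)$ is its asymptotic expansion as $k\to\infty$ (locally, in powers of $k^{-1}$, coefficients periodic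 in $k$); $\mathcal{A}(m)=0$ means all coefficients vanish, equivalently $\langle\Theta(m;k),\varphi\rangle=o(k^{-N})$ for all $\varphi\in C^\infty_c(V)$ and all $N$. *)

theory Defs
  imports "HOL-Analysis.Analysis"
begin

text \<open>Coordinates: V = real^'n, the lattice Lambda = integer points (int^'n),
  embedded into V by lat.\<close>

definition lat :: "int ^ 'n \<Rightarrow> real ^ 'n" where
  "lat l = (\<chi> j. real_of_int (l $ j))"

definition rat_vec :: "real ^ 'n \<Rightarrow> bool" where
  "rat_vec a \<longleftrightarrow> (\<forall>j. a $ j \<in> \<rat>)"

text \<open>Rational linear subspace: L0 \<inter> Lambda has full rank in L0.\<close>
definition rational_subspace :: "(real ^ 'n) set \<Rightarrow> bool" where
  "rational_subspace L0 \<longleftrightarrow> subspace L0 \<and> span (L0 \<inter> range lat) = L0"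

definition rational_polyhedron :: "(real ^ 'n) set \<Rightarrow> bool" where
  "rational_polyhedron P \<longleftrightarrow>
     (\<exists>F. finite F \<and> (\<forall>(a, c) \<in> F. rat_vec a \<and> c \<in> \<rat>) \<and>
          P = {v. \<forall>(a, c) \<in> F. a \<bullet> v \<ge> c})"

definition periodic_int :: "(int \<Rightarrow> complex) \<Rightarrow> bool" where
  "periodic_int f \<longleftrightarrow> (\<exists>N>0. \<forall>k. f (k + N) = f k)"

definition quasi_poly_int :: "(int \<Rightarrow> complex) \<Rightarrow> bool" where
  "quasi_poly_int c \<longleftrightarrow>
     (\<exists>D f. (\<forall>d<D. periodic_int (f d)) \<and>
            (\<forall>k. c k = (\<Sum>d<D. f d k * of_int k ^ d)))"

definition qpoly_poly_in_lambda :: "(int \<Rightarrow> int ^ 'n \<Rightarrow> complex) \<Rightarrow> bool" where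
  "qpoly_poly_in_lambda p \<longleftrightarrow>
     (\<exists>M (c :: nat \<Rightarrow> int \<Rightarrow> complex) (e :: nat \<Rightarrow> 'n \<Rightarrow> nat).
        (\<forall>i<M. quasi_poly_int (c i)) \<and>
        (\<forall>k l. p k l = (\<Sum>i<M. c i k * (\<Prod>j\<in>UNIV. of_int (l $ j) ^ e i j))))"

definition finite_order_character :: "(int ^ 'n \<Rightarrow> complex) \<Rightarrow> bool" where
  "finite_order_character g \<longleftrightarrow>
     (\<forall>a b. g (a + b) = g a * g b) \<and> (\<forall>a. norm (g a) = 1) \<and>
     (\<exists>N::nat. N > 0 \<and> (\<forall>a. g a ^ N = 1))"

definition cone_PS :: "(real ^ 'n) set \<Rightarrow> real ^ 'n \<Rightarrow> (real \<times> (real ^ 'n)) set" where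
  "cone_PS P \<sigma> = {(t, t *\<^sub>R v + \<sigma>) | t v. t > 0 \<and> v \<in> P}"

definition cone_indicator :: "(real ^ 'n) set \<Rightarrow> real ^ 'n \<Rightarrow> int \<Rightarrow> int ^ 'n \<Rightarrow> complex" where
  "cone_indicator P \<sigma> k l = (if (real_of_int k, lat l) \<in> cone_PS P \<sigma> then 1 else 0)"

coinductive smooth_fun :: "('a::euclidean_space \<Rightarrow> complex) \<Rightarrow> bool" where
  "(\<forall>x. f differentiable (at x)) \<Longrightarrow>
   (\<forall>v. smooth_fun (\<lambda>x. frechet_derivative f (at x) v)) \<Longrightarrow> smooth_fun f"

definition test_function :: "(real ^ 'n \<Rightarrow> complex) \<Rightarrow> bool" where
  "test_function \<phi> \<longleftrightarrow> smooth_fun \<phi> \<and> compact (closure {x. \<phi> x \<noteq> 0})"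

text \<open>Pairing of Theta(m;k) = sum_lambda m(k,lambda) delta_{lambda/k} with a test function.\<close>
definition Theta_pair :: "(int \<Rightarrow> int ^ 'n \<Rightarrow> complex) \<Rightarrow> nat \<Rightarrow> (real ^ 'n \<Rightarrow> complex) \<Rightarrow> complex" where
  "Theta_pair m k \<phi> =
     (\<Sum>l\<in>{l. \<phi> ((1 / real k) *\<^sub>R lat l) \<noteq> 0}. m (int k) l * \<phi> ((1 / real k) *\<^sub>R lat l))"

definition asymp_vanishes :: "(int \<Rightarrow> int ^ 'n \<Rightarrow> complex) \<Rightarrow> bool" where
  "asymp_vanishes m \<longleftrightarrow>
     (\<forall>\<phi>. test_function \<phi> \<longrightarrow>
        (\<forall>N::nat. ((\<lambda>k. of_real (real k ^ N) * Theta_pair m k \<phi>) \<longlongrightarrow> 0) sequentially))"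

end

theory Submission
  imports Defs "HOL-Library.Groups_Big_Fun"
begin



definition Dd :: "('a::euclidean_space \<Rightarrow> complex) \<Rightarrow> 'a \<Rightarrow> 'a \<Rightarrow> complex" where
  "Dd f v = (\<lambda>x. frechet_derivative f (at x) v)"

lemma smooth_diff: "smooth_fun f \<Longrightarrow> f differentiable (at x)"
  by (erule smooth_fun.cases) auto

lemma smooth_Dd: "smooth_fun f \<Longrightarrow> smooth_fun (Dd f v)"
  unfolding Dd_def by (erule smooth_fun.cases) auto

lemma smooth_hasd: "smooth_fun f \<Longrightarrow> (f has_derivative frechet_derivative f (at x)) (at x)"
  using smooth_diff frechet_derivative_works by blast

lemma smooth_lin:
  assumes "smooth_fun f" "smooth_fun g"
  shows "smooth_fun (\<lambda>x. a * f x + b * g x)"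
proof -
  let ?X = "\<lambda>F. \<exists>a b f g. smooth_fun f \<and> smooth_fun g \<and> F = (\<lambda>x. a * f x + b * g x)"
  show ?thesis
  proof (rule smooth_fun.coinduct[of ?X])
    show "?X (\<lambda>x. a * f x + b * g x)" using assms by blast
  next
    fix F assume "?X F"
    then obtain a b f g where fg: "smooth_fun f" "smooth_fun g" and F: "F = (\<lambda>x. a * f x + b * g x)" by blast
    have hd: "(F has_derivative (\<lambda>v. a * Dd f v x + b * Dd g v x)) (at x)" for x
      unfolding F Dd_def
      by (intro has_derivative_add has_derivative_mult_right smooth_hasd fg)
    have "\<forall>v. ?X (\<lambda>x. frechet_derivative F (at x) v)"
    proof
      fix v
      have "(\<lambda>x. frechet_derivative F (at x) v) = (\<lambda>x. a * Dd f v x + b * Dd g v x)"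
        using frechet_derivative_at[OF hd] by metis
      then show "?X (\<lambda>x. frechet_derivative F (at x) v)"
        using fg smooth_Dd by blast
    qed
    moreover have "\<forall>x. F differentiable (at x)" using hd differentiableI by blast
    ultimately show "\<exists>f. F = f \<and> (\<forall>x. f differentiable at x) \<and>
           (\<forall>v. ?X (\<lambda>x. frechet_derivative f (at x) v) \<or> smooth_fun (\<lambda>x. frechet_derivative f (at x) v))"
      by blast
  qed
qed


lemma has_derivative_coord:
  "((\<lambda>x::real^'n. complex_of_real (x $ j)) has_derivative (\<lambda>v. complex_of_real (v $ j))) (at x)"
  by (intro has_derivative_of_real bounded_linear.has_derivative[OF bounded_linear_vec_nth] has_derivative_ident)

lemma smooth_zero: "smooth_fun (\<lambda>x. 0)"
proof (rule smooth_fun.coinduct[of "\<lambda>F. F = (\<lambda>x. 0)"])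
  fix F :: "'a \<Rightarrow> complex" assume F: "F = (\<lambda>x. 0)"
  have "frechet_derivative F (at x) = (\<lambda>v. 0)" for x
    unfolding F using frechet_derivative_at[OF has_derivative_const[of 0 "at x"]] by simp
  then show "\<exists>f. F = f \<and> (\<forall>x. f differentiable at x) \<and>
           (\<forall>v. (\<lambda>x. frechet_derivative f (at x) v) = (\<lambda>x. 0) \<or> smooth_fun (\<lambda>x. frechet_derivative f (at x) v))"
  proof (intro exI conjI allI disjI1)
    show "F = F" ..
    fix x show "F differentiable at x" unfolding F by simp
  next
    fix v show "(\<lambda>x. frechet_derivative F (at x) v) = (\<lambda>x. 0)" using \<open>\<And>x. frechet_derivative F (at x) = (\<lambda>v. 0)\<close> by simp
  qed
qed simp


lemma smooth_coord_mult:
  fixes f :: "real^'n \<Rightarrow> complex"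
  assumes "smooth_fun f"
  shows "smooth_fun (\<lambda>x. complex_of_real (x $ j) * f x)"
proof -
  let ?X = "\<lambda>F. \<exists>f g. smooth_fun f \<and> smooth_fun g \<and> F = (\<lambda>x. f x + complex_of_real (x $ j) * g x)"
  show ?thesis
  proof (rule smooth_fun.coinduct[of ?X])
    have "(\<lambda>x. complex_of_real (x $ j) * f x) = (\<lambda>x. 0 + complex_of_real (x $ j) * f x)" by simp
    then show "?X (\<lambda>x. complex_of_real (x $ j) * f x)" using assms smooth_zero by blast
  next
    fix F :: "real^'n \<Rightarrow> complex" assume "?X F"
    then obtain f g where fg: "smooth_fun f" "smooth_fun g" and F: "F = (\<lambda>x. f x + complex_of_real (x $ j) * g x)" by blast
    have hd: "(F has_derivative (\<lambda>v. (1 * Dd f v x + complex_of_real (v $ j) * g x) + complex_of_real (x $ j) * Dd g v x)) (at x)" for x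
    proof -
      have "(F has_derivative (\<lambda>v. Dd f v x + (complex_of_real (x $ j) * Dd g v x + complex_of_real (v $ j) * g x))) (at x)"
        unfolding F Dd_def
        by (rule has_derivative_add[OF smooth_hasd[OF fg(1)] has_derivative_mult[OF has_derivative_coord smooth_hasd[OF fg(2)]]])
      moreover have "(\<lambda>v. Dd f v x + (complex_of_real (x $ j) * Dd g v x + complex_of_real (v $ j) * g x)) = (\<lambda>v. (1 * Dd f v x + complex_of_real (v $ j) * g x) + complex_of_real (x $ j) * Dd g v x)"
        by (rule ext) (simp add: algebra_simps)
      ultimately show ?thesis by simp
    qed
    have fd: "frechet_derivative F (at x) = (\<lambda>v. (1 * Dd f v x + complex_of_real (v $ j) * g x) + complex_of_real (x $ j) * Dd g v x)" for x
      using frechet_derivative_at[OF hd] by (rule sym)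
    have "\<forall>v. ?X (\<lambda>x. frechet_derivative F (at x) v)"
    proof
      fix v
      have e: "(\<lambda>x. frechet_derivative F (at x) v) = (\<lambda>x. (1 * Dd f v x + complex_of_real (v $ j) * g x) + complex_of_real (x $ j) * Dd g v x)"
        using fd by (intro ext) simp
      have "smooth_fun (\<lambda>x. 1 * Dd f v x + complex_of_real (v $ j) * g x)"
        by (intro smooth_lin smooth_Dd fg)
      with smooth_Dd[OF fg(2)] show "?X (\<lambda>x. frechet_derivative F (at x) v)"
        unfolding e by blast
    qed
    moreover have "\<forall>x. F differentiable (at x)" using hd differentiableI by blast
    ultimately show "\<exists>f. F = f \<and> (\<forall>x. f differentiable at x) \<and>
           (\<forall>v. ?X (\<lambda>x. frechet_derivative f (at x) v) \<or> smooth_fun (\<lambda>x. frechet_derivative f (at x) v))"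
      by blast
  qed
qed


lemma not_in_closure_supp: "x \<notin> closure {x. f x \<noteq> 0} \<Longrightarrow> f x = 0"
  by (metis (mono_tags) closure_subset mem_Collect_eq subsetD)

lemma closure_supp_compact:
  fixes f g :: "'a::heine_borel \<Rightarrow> 'b::zero"
  assumes "compact (closure {x. f x \<noteq> 0})" "closure {x. g x \<noteq> 0} \<subseteq> closure {x. f x \<noteq> 0}"
  shows "compact (closure {x. g x \<noteq> 0})"
proof -
  have "bounded (closure {x. g x \<noteq> 0})"
    by (rule bounded_subset[OF compact_imp_bounded[OF assms(1)] assms(2)])
  then show ?thesis unfolding compact_eq_bounded_closed by simp
qed

lemma test_coord_mult:
  assumes "test_function \<phi>"
  shows "test_function (\<lambda>x. complex_of_real (x $ j) * \<phi> x)"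
proof -
  have sub: "closure {x. complex_of_real (x $ j) * \<phi> x \<noteq> 0} \<subseteq> closure {x. \<phi> x \<noteq> 0}"
    by (intro closure_mono) auto
  have sm: "smooth_fun \<phi>" and cpt: "compact (closure {x. \<phi> x \<noteq> 0})" using assms unfolding test_function_def by auto
  have c: "compact (closure {x. complex_of_real (x $ j) * \<phi> x \<noteq> 0})" by (rule closure_supp_compact[OF cpt sub])
  show ?thesis unfolding test_function_def by (rule conjI[OF smooth_coord_mult[OF sm] c])
qed

lemma test_coord_pow:
  assumes "test_function \<phi>"
  shows "test_function (\<lambda>x. complex_of_real (x $ j) ^ n * \<phi> x)"
proof (induction n)
  case 0
  have "(\<lambda>x. complex_of_real (x $ j) ^ 0 * \<phi> x) = \<phi>" by (rule ext) simp
  then show ?case using assms by (simp only:)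
next
  case (Suc n)
  have "(\<lambda>x. complex_of_real (x $ j) ^ Suc n * \<phi> x) = (\<lambda>x. complex_of_real (x $ j) * (complex_of_real (x $ j) ^ n * \<phi> x))"
    by (rule ext) (simp add: mult.assoc)
  then show ?case using test_coord_mult[OF Suc, of j] by (simp only:)
qed

lemma test_monomial_gen:
  assumes "test_function \<phi>" "finite J"
  shows "test_function (\<lambda>x. (\<Prod>j\<in>J. complex_of_real (x $ j) ^ e j) * \<phi> x)"
  using assms(2)
proof (induction J rule: finite_induct)
  case empty
  have "(\<lambda>x. (\<Prod>j\<in>{}. complex_of_real (x $ j) ^ e j) * \<phi> x) = \<phi>" by (rule ext) simp
  then show ?case using assms by (simp only:)
next
  case (insert a J)
  have "(\<lambda>x. (\<Prod>j\<in>insert a J. complex_of_real (x $ j) ^ e j) * \<phi> x) = (\<lambda>x. complex_of_real (x $ a) ^ e a * ((\<Prod>j\<in>J. complex_of_real (x $ j) ^ e j) * \<phi> x))"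
    by (rule ext) (simp add: insert.hyps mult.assoc)
  then show ?case using test_coord_pow[OF insert.IH, of a "e a"] by (simp only:)
qed

lemma test_monomial:
  assumes "test_function (\<phi> :: real^'n \<Rightarrow> complex)"
  shows "test_function (\<lambda>x. (\<Prod>j\<in>UNIV. complex_of_real (x $ j) ^ e j) * \<phi> x)"
  by (rule test_monomial_gen[OF assms]) simp

lemma test_Dd:
  assumes "test_function \<phi>"
  shows "test_function (Dd \<phi> v)"
proof -
  have sm: "smooth_fun \<phi>" using assms test_function_def by blast
  have "{x. Dd \<phi> v x \<noteq> 0} \<subseteq> closure {x. \<phi> x \<noteq> 0}"
  proof
    fix x assume x: "x \<in> {x. Dd \<phi> v x \<noteq> 0}"
    show "x \<in> closure {x. \<phi> x \<noteq> 0}"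
    proof (rule ccontr)
      assume nx: "x \<notin> closure {x. \<phi> x \<noteq> 0}"
      let ?U = "- closure {x. \<phi> x \<noteq> 0}"
      have "((\<lambda>x. 0) has_derivative (\<lambda>v. 0)) (at x)" by simp
      moreover have "open ?U" by (intro open_Compl closed_closure)
      moreover have "x \<in> ?U" using nx by simp
      moreover have "\<And>y. y \<in> ?U \<Longrightarrow> 0 = \<phi> y"
      proof -
        fix y assume "y \<in> ?U"
        then have "y \<notin> closure {x. \<phi> x \<noteq> 0}" by simp
        then show "0 = \<phi> y" using not_in_closure_supp[of y \<phi>] by simp
      qed
      ultimately have "(\<phi> has_derivative (\<lambda>v. 0)) (at x)"
        by (rule has_derivative_transform_within_open)
      then have "frechet_derivative \<phi> (at x) = (\<lambda>v. 0)" by (rule frechet_derivative_at[symmetric])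
      then show False using x by (simp add: Dd_def)
    qed
  qed
  then have "closure {x. Dd \<phi> v x \<noteq> 0} \<subseteq> closure {x. \<phi> x \<noteq> 0}"
    by (metis closure_closure closure_mono)
  moreover have "compact (closure {x. \<phi> x \<noteq> 0})" using assms unfolding test_function_def by auto
  ultimately have c: "compact (closure {x. Dd \<phi> v x \<noteq> 0})" by (rule closure_supp_compact[rotated])
  show ?thesis unfolding test_function_def by (rule conjI[OF smooth_Dd[OF sm] c])
qed

lemma test_support:
  assumes "test_function \<phi>"
  shows "\<exists>R>0. \<forall>x. \<phi> x \<noteq> 0 \<longrightarrow> norm x \<le> R"
proof -
  have "bounded (closure {x. \<phi> x \<noteq> 0})" using assms compact_imp_bounded unfolding test_function_def by auto
  then obtain R where R: "R>0" "\<And>x. x \<in> closure {x. \<phi> x \<noteq> 0} \<Longrightarrow> norm x \<le> R"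
    unfolding bounded_pos by auto
  have "norm x \<le> R" if "\<phi> x \<noteq> 0" for x
    using R(2)[OF closure_subset[THEN subsetD]] that by simp
  then show ?thesis using R(1) by auto
qed

lemma test_bounded:
  assumes "test_function \<phi>"
  shows "\<exists>C. \<forall>x. norm (\<phi> x) \<le> C"
proof -
  let ?K = "closure {x. \<phi> x \<noteq> 0}"
  have K: "compact ?K" using assms unfolding test_function_def by auto
  have sm: "smooth_fun \<phi>" using assms unfolding test_function_def by auto
  have "continuous_on ?K \<phi>"
    by (rule differentiable_imp_continuous_on, rule differentiable_at_imp_differentiable_on) (rule smooth_diff[OF sm])
  then have "compact (\<phi> ` ?K)" using K by (rule compact_continuous_image)
  then have "bounded (\<phi> ` ?K)" by (rule compact_imp_bounded)
  then obtain C where C: "\<And>y. y \<in> \<phi> ` ?K \<Longrightarrow> norm y \<le> C" unfolding bounded_iff by auto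
  have "norm (\<phi> x) \<le> max C 0" for x
  proof (cases "\<phi> x = 0")
    case False then have "x \<in> ?K" by (intro closure_subset[THEN subsetD]) simp
    then have "norm (\<phi> x) \<le> C" using C by auto
    then show ?thesis by simp
  qed simp
  then show ?thesis by auto
qed



definition Del :: "'a::real_normed_vector \<Rightarrow> ('a \<Rightarrow> complex) \<Rightarrow> 'a \<Rightarrow> complex" where
  "Del w f = (\<lambda>x. f x - f (x + w))"

lemma Del_pow_Suc: "(Del w ^^ Suc M) f = (\<lambda>x. (Del w ^^ M) f x - (Del w ^^ M) f (x + w))"
  by (simp add: Del_def)

lemma Del_pow_deriv:
  assumes "\<And>y. (f has_derivative f' y) (at y)"
  shows "((Del w ^^ M) f has_derivative (\<lambda>v. (Del w ^^ M) (\<lambda>z. f' z v) y)) (at y)"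
proof (induction M arbitrary: y)
  case 0
  then show ?case using assms by simp
next
  case (Suc M)
  have sh: "((\<lambda>x. x + w) has_derivative (\<lambda>v. v)) (at y)"
    by (intro has_derivative_add_const has_derivative_ident)
  have "((\<lambda>x. (Del w ^^ M) f (x + w)) has_derivative (\<lambda>v. (Del w ^^ M) (\<lambda>z. f' z v) (y + w))) (at y)"
    using has_derivative_compose[OF sh Suc.IH[of "y + w"]] by simp
  from has_derivative_diff[OF Suc.IH[of y] this]
  show ?case unfolding Del_pow_Suc .
qed

lemma Del_pow_scale: "(Del w ^^ M) (\<lambda>z. c * f z) = (\<lambda>y. c * (Del w ^^ M) f y)"
proof (induction M)
  case 0 then show ?case by simp
next
  case (Suc M)
  show ?case unfolding Del_pow_Suc Suc.IH by (rule ext) (simp add: algebra_simps)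
qed

lemma Del_bound:
  fixes \<psi> :: "real^'n \<Rightarrow> complex"
  assumes "test_function \<psi>"
  shows "\<exists>C. \<forall>h x. norm ((Del (h *\<^sub>R u) ^^ M) \<psi> x) \<le> C * \<bar>h\<bar> ^ M"
  using assms
proof (induction M arbitrary: \<psi>)
  case 0
  then obtain C where "\<forall>x. norm (\<psi> x) \<le> C" using test_bounded by blast
  then show ?case by auto
next
  case (Suc M)
  have sm: "smooth_fun \<psi>" using Suc.prems unfolding test_function_def by auto
  obtain C where C: "\<And>h x. norm ((Del (h *\<^sub>R u) ^^ M) (Dd \<psi> u) x) \<le> C * \<bar>h\<bar> ^ M"
    using Suc.IH[OF test_Dd[OF Suc.prems, of u]] by blast
  have "norm ((Del (h *\<^sub>R u) ^^ Suc M) \<psi> x) \<le> C * \<bar>h\<bar> ^ Suc M" for h x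
  proof -
    define w where "w = h *\<^sub>R u"
    define G where "G = (Del w ^^ M) \<psi>"
    define G' where "G' = (\<lambda>y v. (Del w ^^ M) (\<lambda>z. frechet_derivative \<psi> (at z) v) y)"
    have dG: "(G has_derivative G' y) (at y)" for y
      unfolding G_def G'_def by (rule Del_pow_deriv) (rule smooth_hasd[OF sm])
    have lin: "frechet_derivative \<psi> (at z) w = complex_of_real h * Dd \<psi> u z" for z
    proof -
      have "bounded_linear (frechet_derivative \<psi> (at z))"
        using has_derivative_bounded_linear[OF smooth_hasd[OF sm]] .
      then have "frechet_derivative \<psi> (at z) (h *\<^sub>R u) = h *\<^sub>R frechet_derivative \<psi> (at z) u"
        by (simp add: bounded_linear.linear linear_scale)
      then show ?thesis unfolding w_def Dd_def by (simp add: scaleR_conv_of_real)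
    qed
    have G'w: "G' y w = complex_of_real h * (Del w ^^ M) (Dd \<psi> u) y" for y
      unfolding G'_def lin Del_pow_scale by simp
    define \<gamma> where "\<gamma> = (\<lambda>t::real. G (x + t *\<^sub>R w))"
    have lt: "((\<lambda>t::real. x + t *\<^sub>R w) has_derivative (\<lambda>s. s *\<^sub>R w)) (at t)" for t
      using has_derivative_add[OF has_derivative_const[of x] has_derivative_scaleR_left[OF has_derivative_ident[of "at t"], of w]] by simp
    have dgam: "(\<gamma> has_derivative (\<lambda>s. G' (x + t *\<^sub>R w) (s *\<^sub>R w))) (at t)" for t
      unfolding \<gamma>_def using has_derivative_compose[OF lt dG] by simp
    have cont: "continuous_on {0..1} \<gamma>"
      by (rule has_derivative_continuous_on) (rule has_derivative_at_withinI[OF dgam])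
    obtain t where "t \<in> {0<..<1}" "norm (\<gamma> 1 - \<gamma> 0) \<le> norm (G' (x + t *\<^sub>R w) ((1 - 0) *\<^sub>R w))"
      using mvt_general[of 0 1 \<gamma>, OF _ cont dgam] by auto
    then have "norm (G x - G (x + w)) \<le> norm (G' (x + t *\<^sub>R w) w)"
      unfolding \<gamma>_def by (simp add: norm_minus_commute)
    also have "\<dots> = \<bar>h\<bar> * norm ((Del w ^^ M) (Dd \<psi> u) (x + t *\<^sub>R w))"
      unfolding G'w by (simp add: norm_mult)
    also have "\<dots> \<le> \<bar>h\<bar> * (C * \<bar>h\<bar> ^ M)"
      unfolding w_def by (intro mult_left_mono C) simp
    finally show ?thesis unfolding w_def G_def Del_pow_Suc by (simp add: algebra_simps)
  qed
  then show ?case by blast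
qed



lemma lat_add: "lat (a + b) = lat a + lat b"
  by (simp add: lat_def vec_eq_iff)

lemma lat_diff: "lat (a - b) = lat a - lat b"
  by (simp add: lat_def vec_eq_iff)

lemma lat_comp: "lat l $ j = real_of_int (l $ j)"
  by (simp add: lat_def)

lemma box_count:
  fixes B :: real
  assumes "B \<ge> 0"
  shows "finite {l::int^'n. norm (lat l) \<le> B} \<and> real (card {l::int^'n. norm (lat l) \<le> B}) \<le> (2 * B + 1) ^ CARD('n)"
proof -
  define b where "b = \<lfloor>B\<rfloor>"
  have b0: "b \<ge> 0" using assms by (simp add: b_def)
  define T where "T = (\<lambda>f. \<chi> j. f j) ` (PiE (UNIV::'n set) (\<lambda>_. {-b..b}))"
  have sub: "{l::int^'n. norm (lat l) \<le> B} \<subseteq> T"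
  proof
    fix l :: "int^'n" assume "l \<in> {l. norm (lat l) \<le> B}"
    then have nl: "norm (lat l) \<le> B" by simp
    have "\<bar>l $ j\<bar> \<le> b" for j
    proof -
      have "\<bar>lat l $ j\<bar> \<le> norm (lat l)" by (rule component_le_norm_cart)
      then have "real_of_int \<bar>l $ j\<bar> \<le> B" using nl by (simp add: lat_comp)
      then show ?thesis unfolding b_def by linarith
    qed
    then have "\<forall>j. l $ j \<in> {-b..b}" by (simp add: abs_le_iff) (metis minus_le_iff)
    then have "(\<lambda>j. l $ j) \<in> PiE UNIV (\<lambda>_. {-b..b})" by auto
    moreover have "l = (\<chi> j. (\<lambda>j. l $ j) j)" by simp
    ultimately show "l \<in> T" unfolding T_def by blast
  qed
  have fT: "finite T" unfolding T_def by (intro finite_imageI finite_PiE) auto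
  have "card T \<le> card (PiE (UNIV::'n set) (\<lambda>_. {-b..b}))" unfolding T_def by (rule card_image_le) (intro finite_PiE, auto)
  also have "\<dots> = nat (2 * b + 1) ^ CARD('n)" by (simp add: card_PiE)
  finally have cT: "real (card T) \<le> real (nat (2 * b + 1)) ^ CARD('n)"
    by (metis of_nat_le_iff of_nat_power)
  have "real (nat (2 * b + 1)) = 2 * real_of_int b + 1" using b0 by simp
  also have "\<dots> \<le> 2 * B + 1" unfolding b_def by linarith
  finally have "real (nat (2 * b + 1)) ^ CARD('n) \<le> (2 * B + 1) ^ CARD('n)"
    by (intro power_mono) auto
  moreover have "card {l::int^'n. norm (lat l) \<le> B} \<le> card T" using card_mono[OF fT sub] .
  ultimately show ?thesis using finite_subset[OF sub fT] cT by linarith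
qed



definition xk :: "nat \<Rightarrow> int^'n \<Rightarrow> real^'n" where
  "xk k l = (1 / real k) *\<^sub>R lat l"

definition Zs :: "(int^'n \<Rightarrow> complex) \<Rightarrow> (int^'n \<Rightarrow> complex) \<Rightarrow> nat \<Rightarrow> (real^'n \<Rightarrow> complex) \<Rightarrow> complex" where
  "Zs g J k \<psi> = Sum_any (\<lambda>l. g l * J l * \<psi> (xk k l))"

lemma xk_shift: "xk k (l + \<mu>) = xk k l + (1 / real k) *\<^sub>R lat \<mu>"
  by (simp add: xk_def lat_add scaleR_add_right)

lemma supp_xk:
  assumes "\<forall>x. \<psi> x \<noteq> 0 \<longrightarrow> norm x \<le> R" "k > 0"
  shows "{l. \<psi> (xk k l) \<noteq> 0} \<subseteq> {l. norm (lat l) \<le> real k * R}"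
proof
  fix l assume "l \<in> {l. \<psi> (xk k l) \<noteq> 0}"
  then have "norm ((1 / real k) *\<^sub>R lat l) \<le> R" using assms(1) unfolding xk_def by auto
  then have "norm (lat l) / real k \<le> R" by simp
  then show "l \<in> {l. norm (lat l) \<le> real k * R}" using assms(2) by (simp add: field_simps)
qed

lemma fin_xk:
  assumes "\<forall>x. \<psi> x \<noteq> 0 \<longrightarrow> norm x \<le> R" "k > 0"
  shows "finite {l. \<psi> (xk k l) \<noteq> 0}"
proof -
  have "{l. \<psi> (xk k l) \<noteq> 0} \<subseteq> {l. norm (lat l) \<le> real k * max R 0}"
    using supp_xk[OF _ assms(2), of \<psi> "max R 0"] assms(1) by force
  moreover have "finite {l::int^'a. norm (lat l) \<le> real k * max R 0}" by (rule conjunct1[OF box_count]) simp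
  ultimately show ?thesis by (rule finite_subset)
qed

lemma fin_prod:
  fixes g J :: "int^'n \<Rightarrow> complex"
  assumes "finite {l. \<psi> (xk k l) \<noteq> 0}"
  shows "finite {l. g l * J l * \<psi> (xk k l) \<noteq> 0}"
  by (rule finite_subset[OF _ assms], rule Collect_mono, auto)

lemma supp_Del:
  assumes "\<forall>x. \<psi> x \<noteq> 0 \<longrightarrow> norm x \<le> R"
  shows "\<forall>x. Del w \<psi> x \<noteq> 0 \<longrightarrow> norm x \<le> R + norm w"
proof (intro allI impI)
  fix x assume "Del w \<psi> x \<noteq> 0"
  then have "\<psi> x \<noteq> 0 \<or> \<psi> (x + w) \<noteq> 0" unfolding Del_def by auto
  then show "norm x \<le> R + norm w"
  proof
    assume "\<psi> x \<noteq> 0" then show ?thesis using assms by (smt (verit) norm_ge_zero)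
  next
    assume "\<psi> (x + w) \<noteq> 0" then have "norm (x + w) \<le> R" using assms by auto
    moreover have "norm x \<le> norm (x + w) + norm w" by (metis add_diff_cancel norm_triangle_ineq4)
    ultimately show ?thesis by simp
  qed
qed

lemma supp_Del_pow:
  assumes "\<forall>x. \<psi> x \<noteq> 0 \<longrightarrow> norm x \<le> R"
  shows "\<forall>x. (Del w ^^ M) \<psi> x \<noteq> 0 \<longrightarrow> norm x \<le> R + real M * norm w"
proof (induction M)
  case 0 then show ?case using assms by simp
next
  case (Suc M)
  from supp_Del[OF Suc.IH, of w] show ?case by (simp add: algebra_simps)
qed

lemma Zs_shift:
  assumes mult: "\<And>a b. g (a + b) = g a * g b"
    and Jinv: "\<And>l. J (l + \<mu>) = J l"
    and supp: "\<forall>x. \<psi> x \<noteq> 0 \<longrightarrow> norm x \<le> R" and k: "k > 0"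
  shows "g \<mu> * Zs g J k (Del ((1 / real k) *\<^sub>R lat \<mu>) \<psi>) = (g \<mu> - 1) * Zs g J k \<psi>"
proof -
  define w where "w = (1 / real k) *\<^sub>R lat \<mu>"
  define H where "H = (\<lambda>l. g l * J l * \<psi> (xk k l))"
  define H' where "H' = (\<lambda>l. g l * J l * \<psi> (xk k l + w))"
  have fH: "finite {l. H l \<noteq> 0}" unfolding H_def by (intro fin_prod fin_xk[OF supp k])
  have supp': "\<forall>x. (\<lambda>x. \<psi> (x + w)) x \<noteq> 0 \<longrightarrow> norm x \<le> R + norm w"
  proof (intro allI impI)
    fix x assume "\<psi> (x + w) \<noteq> 0"
    then have "norm (x + w) \<le> R" using supp by auto
    moreover have "norm x \<le> norm (x + w) + norm w" by (metis add_diff_cancel norm_triangle_ineq4)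
    ultimately show "norm x \<le> R + norm w" by simp
  qed
  have fH': "finite {l. H' l \<noteq> 0}" unfolding H'_def
    using fin_prod[OF fin_xk[OF supp' k]] by simp
  have bij: "bij (\<lambda>l::int^'a. l + \<mu>)"
    by (rule bij_betwI[where g="\<lambda>l. l - \<mu>"]) auto
  have "Sum_any H = Sum_any (\<lambda>l. g \<mu> * H' l)"
    by (rule Sum_any.reindex_cong[OF bij]) (simp add: fun_eq_iff H_def H'_def mult Jinv xk_shift w_def)
  also have "\<dots> = g \<mu> * Sum_any H'"
    by (rule Sum_any_right_distrib[symmetric, OF fH'])
  finally have e1: "Sum_any H = g \<mu> * Sum_any H'" .
  have fnH': "finite {l. - H' l \<noteq> 0}" using fH' by simp
  have "Zs g J k (Del w \<psi>) = Sum_any (\<lambda>l. H l + - H' l)"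
    unfolding Zs_def H_def H'_def Del_def by (simp add: algebra_simps)
  also have "\<dots> = Sum_any H + Sum_any (\<lambda>l. - H' l)"
    by (rule Sum_any.distrib[OF fH fnH'])
  also have "Sum_any (\<lambda>l. - H' l) = Sum_any (\<lambda>l. (-1) * H' l)" by simp
  also have "\<dots> = - Sum_any H'" using Sum_any_right_distrib[OF fH', of "-1"] by simp
  finally have e2: "Zs g J k (Del w \<psi>) = Sum_any H - Sum_any H'" by simp
  have "Zs g J k \<psi> = Sum_any H" unfolding Zs_def H_def ..
  then show ?thesis unfolding w_def[symmetric] e2 e1 by (simp add: algebra_simps)
qed

lemma Zs_shift_pow:
  assumes mult: "\<And>a b. g (a + b) = g a * g b"
    and Jinv: "\<And>l. J (l + \<mu>) = J l"
    and supp: "\<forall>x. \<psi> x \<noteq> 0 \<longrightarrow> norm x \<le> R" and k: "k > 0"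
  shows "g \<mu> ^ M * Zs g J k ((Del ((1 / real k) *\<^sub>R lat \<mu>) ^^ M) \<psi>) = (g \<mu> - 1) ^ M * Zs g J k \<psi>"
proof (induction M)
  case 0 then show ?case by simp
next
  case (Suc M)
  let ?w = "(1 / real k) *\<^sub>R lat \<mu>"
  have s: "\<forall>x. (Del ?w ^^ M) \<psi> x \<noteq> 0 \<longrightarrow> norm x \<le> R + real M * norm ?w"
    by (rule supp_Del_pow[OF supp])
  have "g \<mu> ^ Suc M * Zs g J k ((Del ?w ^^ Suc M) \<psi>) = g \<mu> ^ M * (g \<mu> * Zs g J k (Del ?w ((Del ?w ^^ M) \<psi>)))"
    by simp
  also have "\<dots> = g \<mu> ^ M * ((g \<mu> - 1) * Zs g J k ((Del ?w ^^ M) \<psi>))"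
    using Zs_shift[where g=g and J=J and \<mu>=\<mu>, OF mult Jinv s k] by simp
  also have "\<dots> = (g \<mu> - 1) * (g \<mu> ^ M * Zs g J k ((Del ?w ^^ M) \<psi>))" by (simp add: algebra_simps)
  also have "\<dots> = (g \<mu> - 1) ^ Suc M * Zs g J k \<psi>" unfolding Suc.IH by simp
  finally show ?case .
qed



lemma Zs_decay:
  fixes \<psi> :: "real^'n \<Rightarrow> complex" and g :: "int^'n \<Rightarrow> complex" and J :: "nat \<Rightarrow> int^'n \<Rightarrow> complex"
  assumes tf: "test_function \<psi>"
    and mult: "\<And>a b. g (a + b) = g a * g b"
    and gn: "\<And>a. norm (g a) = 1"
    and g\<mu>: "g \<mu> \<noteq> 1"
    and Jinv: "\<And>k l. J k (l + \<mu>) = J k l"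
    and Jb: "\<And>k l. norm (J k l) \<le> 1"
  shows "((\<lambda>k. of_real (real k ^ N) * Zs g (J k) k \<psi>) \<longlongrightarrow> 0) sequentially"
proof -
  define n where "n = CARD('n)"
  define M where "M = N + n + 1"
  define u where "u = lat \<mu>"
  obtain C where C: "\<And>h x. norm ((Del (h *\<^sub>R u) ^^ M) \<psi> x) \<le> C * \<bar>h\<bar> ^ M"
    using Del_bound[OF tf, where u=u and M=M] by blast
  have C0: "C \<ge> 0"
  proof -
    have "norm ((Del (1 *\<^sub>R u) ^^ M) \<psi> 0) \<le> C * \<bar>1::real\<bar> ^ M" by (rule C)
    then have "0 \<le> C * \<bar>1::real\<bar> ^ M" using norm_ge_zero order_trans by blast
    then show ?thesis by simp
  qed
  obtain R where R: "R > 0" "\<forall>x. \<psi> x \<noteq> 0 \<longrightarrow> norm x \<le> R" using test_support[OF tf] by blast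
  define R1 where "R1 = R + real M * norm u"
  have R1: "R1 \<ge> 0" unfolding R1_def using R by simp
  define d where "d = norm (g \<mu> - 1)"
  have d: "d > 0" unfolding d_def using g\<mu> by simp
  define E where "E = (2 * R1 + 1) ^ n"
  define K where "K = E * C / d ^ M"
  have bound: "norm (of_real (real k ^ N) * Zs g (J k) k \<psi>) \<le> K / real k" if k: "k \<ge> 1" for k
  proof -
    have k0: "k > 0" using k by simp
    define w where "w = (1 / real k) *\<^sub>R u"
    define \<psi>M where "\<psi>M = (Del w ^^ M) \<psi>"
    have sM: "\<forall>x. \<psi>M x \<noteq> 0 \<longrightarrow> norm x \<le> R + real M * norm w"
      unfolding \<psi>M_def by (rule supp_Del_pow[OF R(2)])
    have "norm w = norm u / real k" unfolding w_def by simp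
    also have "\<dots> \<le> norm u" using k by (simp add: divide_le_eq mult_le_cancel_left1 order_trans[OF _ mult_right_mono[of 1 "real k" "norm u"]])
    finally have "real M * norm w \<le> real M * norm u" by (intro mult_left_mono) auto
    then have sM': "\<forall>x. \<psi>M x \<noteq> 0 \<longrightarrow> norm x \<le> R1" using sM unfolding R1_def by force
    define A where "A = {l::int^'n. norm (lat l) \<le> real k * R1}"
    have bc: "finite A \<and> real (card A) \<le> (2 * (real k * R1) + 1) ^ n"
      unfolding A_def n_def by (rule box_count) (use R1 in simp)
    have "(2 * (real k * R1) + 1) \<le> real k * (2 * R1 + 1)"
      using k R1 by (simp add: algebra_simps)
    then have cardA: "real (card A) \<le> real k ^ n * E"
      unfolding E_def using bc by (smt (verit) power_mono power_mult_distrib R1 mult_nonneg_nonneg of_nat_0_le_iff)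
    have supA: "{l. g l * J k l * \<psi>M (xk k l) \<noteq> 0} \<subseteq> A"
      using supp_xk[OF sM' k0] unfolding A_def by auto
    have "Zs g (J k) k \<psi>M = sum (\<lambda>l. g l * J k l * \<psi>M (xk k l)) A"
      unfolding Zs_def by (rule Sum_any.expand_superset[OF conjunct1[OF bc] supA])
    then have "norm (Zs g (J k) k \<psi>M) \<le> sum (\<lambda>l. norm (g l * J k l * \<psi>M (xk k l))) A"
      by (simp add: norm_sum)
    also have "\<dots> \<le> sum (\<lambda>l. C * (1 / real k) ^ M) A"
    proof (rule sum_mono)
      fix l
      have "norm (g l * J k l * \<psi>M (xk k l)) = norm (J k l) * norm (\<psi>M (xk k l))"
        by (simp add: norm_mult gn)
      also have "\<dots> \<le> 1 * norm (\<psi>M (xk k l))" by (intro mult_right_mono Jb) simp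
      also have "\<dots> \<le> C * \<bar>1 / real k\<bar> ^ M" unfolding \<psi>M_def w_def using C[of "1 / real k" "xk k l"] by simp
      finally show "norm (g l * J k l * \<psi>M (xk k l)) \<le> C * (1 / real k) ^ M" by simp
    qed
    also have "\<dots> = real (card A) * (C * (1 / real k) ^ M)" by simp
    also have "\<dots> \<le> (real k ^ n * E) * (C * (1 / real k) ^ M)"
      by (intro mult_right_mono cardA) (use C0 in simp)
    finally have b1: "norm (Zs g (J k) k \<psi>M) \<le> real k ^ n * E * (C * (1 / real k) ^ M)" by simp
    have "g \<mu> ^ M * Zs g (J k) k \<psi>M = (g \<mu> - 1) ^ M * Zs g (J k) k \<psi>"
      unfolding \<psi>M_def w_def u_def
      by (rule Zs_shift_pow[where g=g and J="J k" and \<mu>=\<mu>, OF mult Jinv R(2) k0])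
    then have "norm (Zs g (J k) k \<psi>M) = d ^ M * norm (Zs g (J k) k \<psi>)"
      by (metis d_def gn mult_1 norm_mult norm_power power_one)
    with b1 have b2: "d ^ M * norm (Zs g (J k) k \<psi>) \<le> real k ^ n * E * (C * (1 / real k) ^ M)" by simp
    have "norm (of_real (real k ^ N) * Zs g (J k) k \<psi>) = real k ^ N * norm (Zs g (J k) k \<psi>)"
      by (simp add: norm_mult norm_power)
    also have "\<dots> = real k ^ N * (d ^ M * norm (Zs g (J k) k \<psi>)) / d ^ M"
      using d by simp
    also have "\<dots> \<le> real k ^ N * (real k ^ n * E * (C * (1 / real k) ^ M)) / d ^ M"
      by (intro divide_right_mono mult_left_mono b2) (use d in simp_all)
    also have "\<dots> = K * (real k ^ (N + n) / real k ^ M)"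
      unfolding K_def by (simp add: power_add field_simps power_one_over)
    also have "real k ^ (N + n) / real k ^ M = 1 / real k"
      unfolding M_def using k0 by (simp add: field_simps)
    finally show ?thesis by simp
  qed
  have "((\<lambda>k. K / real k) \<longlongrightarrow> 0) sequentially"
    by (rule tendsto_divide_0[OF tendsto_const]) (rule filterlim_at_top_imp_at_infinity[OF filterlim_real_sequentially])
  moreover have "eventually (\<lambda>k. norm (of_real (real k ^ N) * Zs g (J k) k \<psi>) \<le> K / real k) sequentially"
    using bound eventually_sequentially by blast
  ultimately show ?thesis by (rule Lim_null_comparison[rotated])
qed



lemma cone_mem_iff:
  "(real_of_int k, x) \<in> cone_PS P \<sigma> \<longleftrightarrow> k > 0 \<and> (1 / real_of_int k) *\<^sub>R (x - \<sigma>) \<in> P"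
proof
  assume "(real_of_int k, x) \<in> cone_PS P \<sigma>"
  then obtain t v where tv: "real_of_int k = t" "x = t *\<^sub>R v + \<sigma>" "t > 0" "v \<in> P"
    unfolding cone_PS_def by auto
  then have "(1 / real_of_int k) *\<^sub>R (x - \<sigma>) = v" by simp
  then show "k > 0 \<and> (1 / real_of_int k) *\<^sub>R (x - \<sigma>) \<in> P" using tv by simp
next
  assume a: "k > 0 \<and> (1 / real_of_int k) *\<^sub>R (x - \<sigma>) \<in> P"
  define v where "v = (1 / real_of_int k) *\<^sub>R (x - \<sigma>)"
  have "x = real_of_int k *\<^sub>R v + \<sigma>" unfolding v_def using a by simp
  then show "(real_of_int k, x) \<in> cone_PS P \<sigma>" unfolding cone_PS_def using a v_def by force
qed

lemma cone_inv:
  assumes inv: "\<forall>v\<in>P. \<forall>w\<in>L0. v + w \<in> P" and sub: "subspace L0" and u: "lat \<mu> \<in> L0"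
  shows "cone_indicator P \<sigma> k (l + \<mu>) = cone_indicator P \<sigma> k l"
proof -
  have "(real_of_int k, lat (l + \<mu>)) \<in> cone_PS P \<sigma> \<longleftrightarrow> (real_of_int k, lat l) \<in> cone_PS P \<sigma>"
  proof (cases "k > 0")
    case True
    let ?a = "(1 / real_of_int k) *\<^sub>R (lat l - \<sigma>)"
    let ?w = "(1 / real_of_int k) *\<^sub>R lat \<mu>"
    have w1: "?w \<in> L0" by (rule subspace_scale[OF sub u])
    have w2: "- ?w \<in> L0" by (rule subspace_neg[OF sub w1])
    have e: "(1 / real_of_int k) *\<^sub>R (lat (l + \<mu>) - \<sigma>) = ?a + ?w"
      by (simp add: lat_add algebra_simps)
    have "?a + ?w \<in> P \<longleftrightarrow> ?a \<in> P"
    proof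
      assume "?a + ?w \<in> P"
      from inv[rule_format, OF this w2] show "?a \<in> P" by simp
    next
      assume "?a \<in> P"
      from inv[rule_format, OF this w1] show "?a + ?w \<in> P" .
    qed
    then show ?thesis unfolding cone_mem_iff e using True by simp
  next
    case False then show ?thesis unfolding cone_mem_iff by simp
  qed
  then show ?thesis unfolding cone_indicator_def by simp
qed

lemma cone_bound: "norm (cone_indicator P \<sigma> k l) \<le> 1"
  by (simp add: cone_indicator_def)

lemma periodic_bound:
  assumes "periodic_int f"
  shows "\<exists>B\<ge>0. \<forall>k::nat. norm (f (int k)) \<le> B"
proof -
  obtain N where N: "N > 0" "\<And>k. f (k + N) = f k" using assms unfolding periodic_int_def by blast
  have red: "f (int k) = f (int k mod N)" for k :: nat
  proof (induction k rule: less_induct)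
    case (less k)
    show ?case
    proof (cases "int k < N")
      case True then show ?thesis by simp
    next
      case False
      define k' where "k' = nat (int k - N)"
      have k': "int k' = int k - N" "k' < k" unfolding k'_def using False N(1) by auto
      have "f (int k) = f (int k' + N)" using k' by simp
      also have "\<dots> = f (int k')" by (rule N(2))
      also have "\<dots> = f (int k' mod N)" by (rule less.IH[OF k'(2)])
      also have "int k' mod N = int k mod N" using k' by (simp add: mod_diff_right_eq[symmetric])
      finally show ?thesis .
    qed
  qed
  define B where "B = (\<Sum>r\<in>{0..<N}. norm (f r))"
  have "norm (f (int k)) \<le> B" for k :: nat
  proof -
    have "int k mod N \<in> {0..<N}" using N(1) by simp
    then have "norm (f (int k mod N)) \<le> B" unfolding B_def
      by (rule member_le_sum[where f="\<lambda>r. norm (f r)"]) auto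
    then show ?thesis using red by simp
  qed
  moreover have "B \<ge> 0" unfolding B_def by (simp add: sum_nonneg)
  ultimately show ?thesis by blast
qed

lemma qp_bound:
  assumes "quasi_poly_int c"
  shows "\<exists>B D. B \<ge> 0 \<and> (\<forall>k::nat. k \<ge> 1 \<longrightarrow> norm (c (int k)) \<le> B * real k ^ D)"
proof -
  obtain D f where per: "\<forall>d<D. periodic_int (f d)" and c: "\<forall>k. c k = (\<Sum>d<D. f d k * of_int k ^ d)"
    using assms unfolding quasi_poly_int_def by blast
  have "\<forall>d. \<exists>B. d < D \<longrightarrow> B \<ge> 0 \<and> (\<forall>k::nat. norm (f d (int k)) \<le> B)"
    using periodic_bound per by blast
  then obtain B where B: "\<And>d. d < D \<Longrightarrow> B d \<ge> 0 \<and> (\<forall>k::nat. norm (f d (int k)) \<le> B d)"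
    using choice by meson
  have "norm (c (int k)) \<le> (\<Sum>d<D. B d) * real k ^ D" if k: "k \<ge> 1" for k :: nat
  proof -
    have "norm (c (int k)) \<le> (\<Sum>d<D. norm (f d (int k) * of_int (int k) ^ d))"
      unfolding c[rule_format] by (rule norm_sum)
    also have "\<dots> \<le> (\<Sum>d<D. B d * real k ^ D)"
    proof (rule sum_mono)
      fix d assume "d \<in> {..<D}"
      then have d: "d < D" by simp
      have "norm (f d (int k) * of_int (int k) ^ d) = norm (f d (int k)) * real k ^ d"
        by (simp add: norm_mult norm_power)
      also have "\<dots> \<le> B d * real k ^ D"
        by (intro mult_mono power_increasing) (use B[OF d] k d in auto)
      finally show "norm (f d (int k) * of_int (int k) ^ d) \<le> B d * real k ^ D" .
    qed
    also have "\<dots> = (\<Sum>d<D. B d) * real k ^ D" by (simp add: sum_distrib_right)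
    finally show ?thesis .
  qed
  moreover have "(\<Sum>d<D. B d) \<ge> 0" by (rule sum_nonneg) (use B in simp)
  ultimately show ?thesis by blast
qed



lemma monomial_scale:
  fixes l :: "int^'n"
  assumes k: "k > 0"
  shows "(\<Prod>j\<in>UNIV. complex_of_int (l $ j) ^ e j) =
         complex_of_real (real k) ^ (\<Sum>j\<in>UNIV. e j) * (\<Prod>j\<in>UNIV. complex_of_real (xk k l $ j) ^ e j)"
proof -
  have "complex_of_int (l $ j) = complex_of_real (real k) * complex_of_real (xk k l $ j)" for j
  proof -
    have "real k * (xk k l $ j) = real_of_int (l $ j)" unfolding xk_def lat_def using k by simp
    then have "complex_of_real (real k * (xk k l $ j)) = complex_of_int (l $ j)" by simp
    then show ?thesis by simp
  qed
  then have "(\<Prod>j\<in>UNIV. complex_of_int (l $ j) ^ e j) = (\<Prod>j\<in>UNIV. complex_of_real (real k) ^ e j * complex_of_real (xk k l $ j) ^ e j)"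
    by (simp add: power_mult_distrib)
  also have "\<dots> = (\<Prod>j\<in>UNIV. complex_of_real (real k) ^ e j) * (\<Prod>j\<in>UNIV. complex_of_real (xk k l $ j) ^ e j)"
    by (rule prod.distrib)
  also have "(\<Prod>j\<in>UNIV. complex_of_real (real k) ^ e j) = complex_of_real (real k) ^ (\<Sum>j\<in>UNIV. e j)"
    by (rule power_sum[symmetric])
  finally show ?thesis .
qed

theorem proposition4p2:
  fixes P L0 :: "(real ^ 'n) set" and \<sigma> :: "real ^ 'n"
    and p :: "int \<Rightarrow> int ^ 'n \<Rightarrow> complex" and g :: "int ^ 'n \<Rightarrow> complex"
  assumes "rational_polyhedron P"
    and "rational_subspace L0"
    and "\<forall>v\<in>P. \<forall>w\<in>L0. v + w \<in> P"
    and "rat_vec \<sigma>"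
    and "qpoly_poly_in_lambda p"
    and "finite_order_character g"
    and "\<exists>l1 l2. lat l1 \<in> L0 \<and> lat l2 \<in> L0 \<and> g l1 \<noteq> g l2"
  shows "asymp_vanishes (\<lambda>k l. g l * p k l * cone_indicator P \<sigma> k l)"
proof -
  have mult: "\<And>a b. g (a + b) = g a * g b" and gn: "\<And>a. norm (g a) = 1"
    using assms(6) unfolding finite_order_character_def by auto
  have sub: "subspace L0" using assms(2) unfolding rational_subspace_def by auto
  obtain l1 l2 where l12: "lat l1 \<in> L0" "lat l2 \<in> L0" "g l1 \<noteq> g l2" using assms(7) by blast
  define \<mu> where "\<mu> = l1 - l2"
  have u: "lat \<mu> \<in> L0" unfolding \<mu>_def lat_diff by (rule subspace_diff[OF sub l12(1) l12(2)])
  have g\<mu>: "g \<mu> \<noteq> 1"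
  proof
    assume "g \<mu> = 1"
    have "g l1 = g (\<mu> + l2)" unfolding \<mu>_def by simp
    also have "\<dots> = g l2" using mult[of \<mu> l2] \<open>g \<mu> = 1\<close> by simp
    finally show False using l12(3) by simp
  qed
  define J where "J = (\<lambda>k::nat. cone_indicator P \<sigma> (int k))"
  have Jinv: "\<And>k l. J k (l + \<mu>) = J k l" unfolding J_def by (rule cone_inv[OF assms(3) sub u])
  have Jb: "\<And>k l. norm (J k l) \<le> 1" unfolding J_def by (rule cone_bound)
  obtain Mp :: nat and c :: "nat \<Rightarrow> int \<Rightarrow> complex" and e :: "nat \<Rightarrow> 'n \<Rightarrow> nat" where cq: "\<forall>i<Mp. quasi_poly_int (c i)"
    and prep: "\<forall>k l. p k l = (\<Sum>i<Mp. c i k * (\<Prod>j\<in>UNIV. of_int (l $ j) ^ e i j))"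
    using assms(5) unfolding qpoly_poly_in_lambda_def by blast
  have "\<forall>i. \<exists>BD. i < Mp \<longrightarrow> fst BD \<ge> 0 \<and> (\<forall>k::nat. k \<ge> 1 \<longrightarrow> norm (c i (int k)) \<le> fst BD * real k ^ snd BD)"
  proof
    fix i
    show "\<exists>BD. i < Mp \<longrightarrow> fst BD \<ge> 0 \<and> (\<forall>k::nat. k \<ge> 1 \<longrightarrow> norm (c i (int k)) \<le> fst BD * real k ^ snd BD)"
    proof (cases "i < Mp")
      case True
      have "quasi_poly_int (c i)" using cq True by simp
      from qp_bound[OF this] obtain B D where "B \<ge> 0" "\<forall>k::nat. k \<ge> 1 \<longrightarrow> norm (c i (int k)) \<le> B * real k ^ D"
        by auto
      then show ?thesis by (intro exI[of _ "(B, D)"]) simp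
    qed simp
  qed
  from choice[OF this] obtain BD where BD0: "\<forall>i. i < Mp \<longrightarrow> fst (BD i) \<ge> 0 \<and> (\<forall>k::nat. k \<ge> 1 \<longrightarrow> norm (c i (int k)) \<le> fst (BD i) * real k ^ snd (BD i))"
    by (rule exE)
  have BD: "\<And>i. i < Mp \<Longrightarrow> fst (BD i) \<ge> 0 \<and> (\<forall>k::nat. k \<ge> 1 \<longrightarrow> norm (c i (int k)) \<le> fst (BD i) * real k ^ snd (BD i))"
    using BD0 by simp
  show ?thesis unfolding asymp_vanishes_def
  proof (intro allI impI)
    fix \<phi> :: "real^'n \<Rightarrow> complex" and N :: nat
    assume tf: "test_function \<phi>"
    define m where "m = (\<lambda>k l. g l * p k l * cone_indicator P \<sigma> k l)"
    define \<phi>i where "\<phi>i = (\<lambda>i x. (\<Prod>j\<in>UNIV. complex_of_real (x $ j) ^ e i j) * \<phi> x)"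
    have tfi: "test_function (\<phi>i i)" for i unfolding \<phi>i_def by (rule test_monomial[OF tf])
    define E where "E = (\<lambda>i. \<Sum>j\<in>UNIV. e i j)"
    define Ni where "Ni = (\<lambda>i. N + snd (BD i) + E i)"
    define X where "X = (\<lambda>i k. of_real (real k ^ Ni i) * Zs g (J k) k (\<phi>i i))"
    obtain R where R: "R > 0" "\<forall>x. \<phi> x \<noteq> 0 \<longrightarrow> norm x \<le> R" using test_support[OF tf] by blast
    have decomp: "Theta_pair m k \<phi> = (\<Sum>i<Mp. (c i (int k) * complex_of_real (real k) ^ E i) * Zs g (J k) k (\<phi>i i))"
      if k: "k \<ge> 1" for k
    proof -
      have k0: "k > 0" using k by simp
      define S where "S = {l. \<phi> (xk k l) \<noteq> 0}"
      have fS: "finite S" unfolding S_def by (rule fin_xk[OF R(2) k0])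
      have pt: "m (int k) l * \<phi> (xk k l) = (\<Sum>i<Mp. (c i (int k) * complex_of_real (real k) ^ E i) * (g l * J k l * \<phi>i i (xk k l)))" for l
      proof -
        have "m (int k) l * \<phi> (xk k l) = (\<Sum>i<Mp. c i (int k) * (\<Prod>j\<in>UNIV. of_int (l $ j) ^ e i j)) * (g l * J k l * \<phi> (xk k l))"
          unfolding m_def J_def prep[rule_format] by (simp add: algebra_simps)
        also have "\<dots> = (\<Sum>i<Mp. c i (int k) * (\<Prod>j\<in>UNIV. of_int (l $ j) ^ e i j) * (g l * J k l * \<phi> (xk k l)))"
          by (rule sum_distrib_right)
        also have "\<dots> = (\<Sum>i<Mp. (c i (int k) * complex_of_real (real k) ^ E i) * (g l * J k l * \<phi>i i (xk k l)))"
        proof (rule sum.cong[OF refl])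
          fix i
          show "c i (int k) * (\<Prod>j\<in>UNIV. of_int (l $ j) ^ e i j) * (g l * J k l * \<phi> (xk k l)) =
                (c i (int k) * complex_of_real (real k) ^ E i) * (g l * J k l * \<phi>i i (xk k l))"
            unfolding monomial_scale[OF k0, of l "e i"] \<phi>i_def E_def by (simp add: algebra_simps)
        qed
        finally show ?thesis .
      qed
      have "Theta_pair m k \<phi> = (\<Sum>l\<in>S. m (int k) l * \<phi> (xk k l))"
        unfolding Theta_pair_def S_def xk_def ..
      also have "\<dots> = (\<Sum>l\<in>S. \<Sum>i<Mp. (c i (int k) * complex_of_real (real k) ^ E i) * (g l * J k l * \<phi>i i (xk k l)))"
        by (simp only: pt)
      also have "\<dots> = (\<Sum>i<Mp. \<Sum>l\<in>S. (c i (int k) * complex_of_real (real k) ^ E i) * (g l * J k l * \<phi>i i (xk k l)))"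
        by (rule sum.swap)
      also have "\<dots> = (\<Sum>i<Mp. (c i (int k) * complex_of_real (real k) ^ E i) * (\<Sum>l\<in>S. g l * J k l * \<phi>i i (xk k l)))"
        by (simp add: sum_distrib_left)
      also have "\<dots> = (\<Sum>i<Mp. (c i (int k) * complex_of_real (real k) ^ E i) * Zs g (J k) k (\<phi>i i))"
      proof (rule sum.cong[OF refl])
        fix i
        have "{l. g l * J k l * \<phi>i i (xk k l) \<noteq> 0} \<subseteq> S" unfolding S_def \<phi>i_def by auto
        then have "Zs g (J k) k (\<phi>i i) = (\<Sum>l\<in>S. g l * J k l * \<phi>i i (xk k l))"
          unfolding Zs_def by (rule Sum_any.expand_superset[OF fS])
        then show "(c i (int k) * complex_of_real (real k) ^ E i) * (\<Sum>l\<in>S. g l * J k l * \<phi>i i (xk k l)) =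
                   (c i (int k) * complex_of_real (real k) ^ E i) * Zs g (J k) k (\<phi>i i)" by simp
      qed
      finally show ?thesis .
    qed
    have bound: "norm (of_real (real k ^ N) * Theta_pair m k \<phi>) \<le> (\<Sum>i<Mp. fst (BD i) * norm (X i k))"
      if k: "k \<ge> 1" for k
    proof -
      have "norm (of_real (real k ^ N) * Theta_pair m k \<phi>) = norm (\<Sum>i<Mp. of_real (real k ^ N) * ((c i (int k) * complex_of_real (real k) ^ E i) * Zs g (J k) k (\<phi>i i)))"
        unfolding decomp[OF k] by (simp add: sum_distrib_left)
      also have "\<dots> \<le> (\<Sum>i<Mp. norm (of_real (real k ^ N) * ((c i (int k) * complex_of_real (real k) ^ E i) * Zs g (J k) k (\<phi>i i))))"
        by (rule norm_sum)
      also have "\<dots> \<le> (\<Sum>i<Mp. fst (BD i) * norm (X i k))"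
      proof (rule sum_mono)
        fix i assume "i \<in> {..<Mp}"
        then have i: "i < Mp" by simp
        have "norm (of_real (real k ^ N) * ((c i (int k) * complex_of_real (real k) ^ E i) * Zs g (J k) k (\<phi>i i)))
              = norm (c i (int k)) * (real k ^ N * real k ^ E i * norm (Zs g (J k) k (\<phi>i i)))"
          by (simp add: norm_mult norm_power)
        also have "\<dots> \<le> (fst (BD i) * real k ^ snd (BD i)) * (real k ^ N * real k ^ E i * norm (Zs g (J k) k (\<phi>i i)))"
          by (intro mult_right_mono) (use BD[OF i] k in auto)
        also have "\<dots> = fst (BD i) * norm (X i k)"
          unfolding X_def Ni_def by (simp add: norm_mult norm_power power_add algebra_simps)
        finally show "norm (of_real (real k ^ N) * ((c i (int k) * complex_of_real (real k) ^ E i) * Zs g (J k) k (\<phi>i i))) \<le> fst (BD i) * norm (X i k)" .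
      qed
      finally show ?thesis .
    qed
    have lim: "((\<lambda>k. \<Sum>i<Mp. fst (BD i) * norm (X i k)) \<longlongrightarrow> 0) sequentially"
    proof (rule tendsto_null_sum)
      fix i
      have "((\<lambda>k. X i k) \<longlongrightarrow> 0) sequentially"
        unfolding X_def by (rule Zs_decay[where g=g and J=J and \<mu>=\<mu>, OF tfi mult gn g\<mu> Jinv Jb])
      then show "((\<lambda>k. fst (BD i) * norm (X i k)) \<longlongrightarrow> 0) sequentially"
        by (intro tendsto_mult_right_zero tendsto_norm_zero)
    qed
    have ev: "eventually (\<lambda>k. norm (of_real (real k ^ N) * Theta_pair m k \<phi>) \<le> (\<Sum>i<Mp. fst (BD i) * norm (X i k))) sequentially"
      using bound eventually_sequentially by blast
    have "((\<lambda>k. of_real (real k ^ N) * Theta_pair m k \<phi>) \<longlongrightarrow> 0) sequentially"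
      by (rule Lim_null_comparison[OF ev lim])
    then show "((\<lambda>k. of_real (real k ^ N) * Theta_pair (\<lambda>k l. g l * p k l * cone_indicator P \<sigma> k l) k \<phi>) \<longlongrightarrow> 0) sequentially"
      unfolding m_def .
  qed
qed


end
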